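(* Let $f(z)=z+\sum_{k=2}^{\infty}a_kz^k$ be analytic in $\mathbb{D}=\{z:|z|<1\}$ with $zf'(z)-f(z)=\frac12 z^2\phi(z)$ for all $z\in\mathbb{D}$, where $\phi$ is analytic in $\mathbb{D}$ and $|\phi(z)|\le1$, and let $s_n(z;f)=z+\sum_{k=2}^n a_kz^k$. Then $\mathrm{Re}\, s_n'(z;f)>0$ in $|z|\le r_0$ for all $n\ge12$, where $r_0=0.547$. *)

theory Defs
  imports "HOL-Complex_Analysis.Complex_Analysis"
begin

definition taylor_coeff :: "(complex \<Rightarrow> complex) \<Rightarrow> nat \<Rightarrow> complex" where
  "taylor_coeff f k = (deriv ^^ k) f 0 / of_nat (fact k)"

definition partial_sum :: "(complex \<Rightarrow> complex) \<Rightarrow> nat \<Rightarrow> complex \<Rightarrow> complex" where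
  "partial_sum f n z = z + (\<Sum>k=2..n. taylor_coeff f k * z ^ k)"

end

theory Submission imports Defs begin
lemma coeff_rel:
  fixes f \<phi> :: "complex \<Rightarrow> complex"
  assumes f_holo: "f holomorphic_on ball 0 1"
    and phi_holo: "\<phi> holomorphic_on ball 0 1"
    and eq: "\<And>z. z \<in> ball 0 1 \<Longrightarrow> z * deriv f z - f z = (1/2) * z^2 * \<phi> z"
    and k: "k \<ge> 2"
  shows "(of_nat k - 1) * taylor_coeff f k = (1/2) * taylor_coeff \<phi> (k-2)"
proof -
  define F where "F = fps_expansion f 0"
  define P where "P = fps_expansion \<phi> 0"
  have hF: "f has_fps_expansion F" unfolding F_def using f_holo by (intro has_fps_expansion_fps_expansion) auto
  have hP: "\<phi> has_fps_expansion P" unfolding P_def using phi_holo by (intro has_fps_expansion_fps_expansion) auto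
  have h1: "(\<lambda>z. z * deriv f z - f z) has_fps_expansion (fps_X * fps_deriv F - F)"
    by (intro fps_expansion_intros hF)
  have h2: "(\<lambda>z. (1/2) * z^2 * \<phi> z) has_fps_expansion (fps_const (1/2) * fps_X^2 * P)"
    by (intro fps_expansion_intros hP)
  have ev: "eventually (\<lambda>z. (1/2) * z^2 * \<phi> z = z * deriv f z - f z) (nhds 0)"
  proof -
    have "eventually (\<lambda>z. z \<in> ball (0::complex) 1) (nhds 0)" by (intro eventually_nhds_in_open) auto
    then show ?thesis by eventually_elim (rule sym, rule eq)
  qed
  have h3: "(\<lambda>z. z * deriv f z - f z) has_fps_expansion (fps_const (1/2) * fps_X^2 * P)"
    using has_fps_expansion_cong[OF ev refl] h2 by blast
  have E: "fps_X * fps_deriv F - F = fps_const (1/2) * fps_X^2 * P"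
    using fps_expansion_unique_complex[OF h1 h3] .
  have tf: "taylor_coeff f k = F $ k" "taylor_coeff \<phi> (k-2) = P $ (k-2)"
    using fps_nth_fps_expansion[OF hF] fps_nth_fps_expansion[OF hP] by (simp_all add: taylor_coeff_def)
  from arg_cong[OF E, of "\<lambda>G. G $ k"] have "of_nat k * F $ k - F $ k = (1/2) * P $ (k-2)"
    using k apply (cases k) apply simp
    by (simp add: fps_X_power_mult_nth mult.assoc)
  then show ?thesis using tf by (simp add: algebra_simps)
qed

lemma num_bound:
  fixes N :: nat
  assumes "N \<ge> 10"
  shows "(\<Sum>k=2..N. real k / (2 * (real k - 1)) * (547/1000)^(k-1))
          + 11 / (20 * (1 - 547/1000)) * (547/1000)^N \<le> 9998/10000"
  using assms
proof (induction N rule: dec_induct)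
  case base
  have e: "{2..10::nat} = {2,3,4,5,6,7,8,9,10}" by auto
  show ?case unfolding e by (simp add: power_divide)
next
  case (step N)
  define r :: real where "r = 547/1000"
  have r: "0 < r" "r < 1" by (auto simp: r_def)
  have "(\<Sum>k=2..Suc N. real k / (2 * (real k - 1)) * r^(k-1)) =
        (\<Sum>k=2..N. real k / (2 * (real k - 1)) * r^(k-1)) + real (Suc N) / (2 * real N) * r^N"
    using step.hyps by (simp add: sum.cl_ivl_Suc)
  moreover have "real (Suc N) / (2 * real N) * r^N + 11 / (20 * (1 - r)) * r^(Suc N)
                 \<le> 11 / (20 * (1 - r)) * r^N"
  proof -
    have a: "real (Suc N) / (2 * real N) \<le> 11/20" using step.hyps by (simp add: field_simps)
    have "11 / (20 * (1 - r)) * r^(Suc N) = 11 / (20 * (1 - r)) * r^N - 11/20 * r^N"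
      using r by (simp add: field_simps)
    moreover have "real (Suc N) / (2 * real N) * r^N \<le> 11/20 * r^N"
      using a r by (intro mult_right_mono) auto
    ultimately show ?thesis by linarith
  qed
  ultimately show ?case using step.IH unfolding r_def by linarith
qed

lemma coeff_le1:
  fixes \<phi> :: "complex \<Rightarrow> complex"
  assumes phi_holo: "\<phi> holomorphic_on ball 0 1"
    and phi_bound: "\<And>z. z \<in> ball 0 1 \<Longrightarrow> cmod (\<phi> z) \<le> 1"
  shows "cmod (taylor_coeff \<phi> j) \<le> 1"
proof -
  let ?c = "cmod (taylor_coeff \<phi> j)"
  have le: "?c * \<rho>^j \<le> 1" if "0 < \<rho>" "\<rho> < 1" for \<rho> :: real
  proof -
    have "\<phi> holomorphic_on ball 0 \<rho>" by (rule holomorphic_on_subset[OF phi_holo]) (use that in auto)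
    moreover have "continuous_on (cball 0 \<rho>) \<phi>"
      by (rule continuous_on_subset[OF holomorphic_on_imp_continuous_on[OF phi_holo]]) (use that in auto)
    moreover have "\<And>x. norm (0 - x) = \<rho> \<Longrightarrow> norm (\<phi> x) \<le> 1"
      using that by (intro phi_bound) auto
    ultimately have "norm ((deriv ^^ j) \<phi> 0) \<le> fact j * 1 / \<rho>^j"
      using that by (intro Cauchy_inequality) auto
    then have "?c \<le> 1 / \<rho>^j"
      by (simp add: taylor_coeff_def norm_divide field_simps)
    then show ?thesis using that by (simp add: field_simps)
  qed
  have "((\<lambda>\<rho>. ?c * \<rho>^j) \<longlongrightarrow> ?c * 1^j) (at_left (1::real))"
    by (intro tendsto_intros)
  moreover have "eventually (\<lambda>\<rho>. ?c * \<rho>^j \<le> 1) (at_left (1::real))"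
  proof -
    have "eventually (\<lambda>\<rho>. \<rho> \<in> {0<..<(1::real)}) (at_left 1)"
      by (rule eventually_at_left_real) simp
    then show ?thesis by eventually_elim (use le in auto)
  qed
  ultimately have "?c * 1^j \<le> 1"
    by (intro tendsto_upperbound) auto
  then show ?thesis by simp
qed

theorem theorem3p3:
  fixes f \<phi> :: "complex \<Rightarrow> complex"
  assumes f_holo: "f holomorphic_on ball 0 1"
    and f0: "f 0 = 0"
    and f'0: "deriv f 0 = 1"
    and phi_holo: "\<phi> holomorphic_on ball 0 1"
    and phi_bound: "\<And>z. z \<in> ball 0 1 \<Longrightarrow> cmod (\<phi> z) \<le> 1"
    and eq: "\<And>z. z \<in> ball 0 1 \<Longrightarrow> z * deriv f z - f z = (1/2) * z^2 * \<phi> z"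
  shows "\<forall>n\<ge>12. \<forall>z. cmod z \<le> 0.547 \<longrightarrow> Re (deriv (partial_sum f n) z) > 0"
proof (intro allI impI)
  fix n :: nat and z :: complex
  assume n: "n \<ge> 12" and z: "cmod z \<le> 0.547"
  define a where "a = taylor_coeff f"
  define S where "S = (\<Sum>k=2..n. a k * (of_nat k * z^(k-1)))"
  have D: "(partial_sum f n has_field_derivative (1 + S)) (at z)"
    unfolding partial_sum_def[abs_def] S_def a_def
    by (auto intro!: derivative_eq_intros sum.cong simp: mult_ac)
  have dv: "deriv (partial_sum f n) z = 1 + S" using DERIV_imp_deriv[OF D] .
  have trm: "cmod (a k * (of_nat k * z^(k-1))) \<le> real k / (2 * (real k - 1)) * (547/1000)^(k-1)"
    if k: "k \<in> {2..n}" for k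
  proof -
    have k2: "k \<ge> 2" using k by auto
    have rel: "(of_nat k - 1) * a k = (1/2) * taylor_coeff \<phi> (k-2)"
      unfolding a_def by (rule coeff_rel[OF f_holo phi_holo eq k2])
    have "of_nat k - (1::complex) = of_real (real k - 1)" by simp
    then have "cmod (of_nat k - (1::complex)) = real k - 1" using k2 by (simp only: norm_of_real)
    with rel have "(real k - 1) * cmod (a k) = (1/2) * cmod (taylor_coeff \<phi> (k-2))"
      by (metis norm_mult norm_divide norm_one norm_numeral times_divide_eq_left mult_1)
    also have "\<dots> \<le> 1/2" using coeff_le1[OF phi_holo phi_bound] by simp
    finally have ak: "cmod (a k) \<le> 1 / (2 * (real k - 1))" using k2 by (simp add: field_simps)
    have zk: "cmod z ^ (k-1) \<le> (547/1000)^(k-1)" using z by (intro power_mono) auto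
    have "cmod (a k * (of_nat k * z^(k-1))) = cmod (a k) * real k * cmod z ^ (k-1)"
      by (simp add: norm_mult norm_power)
    also have "\<dots> \<le> 1 / (2 * (real k - 1)) * real k * (547/1000)^(k-1)"
      using ak zk k2 by (intro mult_mono) auto
    finally show ?thesis by simp
  qed
  have "cmod S \<le> (\<Sum>k=2..n. cmod (a k * (of_nat k * z^(k-1))))"
    unfolding S_def by (rule norm_sum)
  also have "\<dots> \<le> (\<Sum>k=2..n. real k / (2 * (real k - 1)) * (547/1000)^(k-1))"
    by (rule sum_mono) (rule trm)
  also have "\<dots> \<le> 9998/10000"
  proof -
    have "0 \<le> 11 / (20 * (1 - 547/1000)) * (547/1000::real)^n" by simp
    then show ?thesis using num_bound[of n] n by linarith
  qed
  finally have "cmod S < 1" by simp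
  moreover have "- Re S \<le> cmod S" using abs_Re_le_cmod[of S] by linarith
  ultimately show "Re (deriv (partial_sum f n) z) > 0" unfolding dv by simp
qed

end
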